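(* Let $\epsilon>0$ and $R\ge 0$, and set $\Lambda(\epsilon,R)=\frac{4}{\epsilon}+2R$. Let $[v_1v_2]$ be a geodesic segment in $\mathbb{H}^n$ with midpoint $m$, and let $s$ be an isometric involution of $\mathbb{H}^n$ such that $d(v_1,s(v_1))\le R$ and $d(v_2,s(v_2))\le R$. If $d(v_1,v_2)\ge \Lambda(\epsilon,R)$, then $d(m,s(m))\le\epsilon$.
   Context: $\mathbb{H}^n$ is real hyperbolic $n$-space with its hyperbolic metric $d$; an isometric involution is an isometry $s$ with $s^2=\mathrm{id}$. *)

theory Defs
  imports "HOL-Analysis.Analysis"
begin

text \<open>Real hyperbolic n-space, hyperboloid model: the point of the upper sheet
  of the hyperboloid x0^2 - |x|^2 = 1 is parametrised by its spatial part x in R^n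
  (x0 = sqrt(1 + |x|^2)). The hyperbolic distance is arcosh of minus the Minkowski
  product.\<close>

definition hdist :: "real^'n \<Rightarrow> real^'n \<Rightarrow> real" where
  "hdist x y = arcosh (sqrt (1 + (norm x)\<^sup>2) * sqrt (1 + (norm y)\<^sup>2) - inner x y)"

definition hisometry :: "(real^'n \<Rightarrow> real^'n) \<Rightarrow> bool" where
  "hisometry s \<longleftrightarrow> (\<forall>x y. hdist (s x) (s y) = hdist x y) \<and> surj s"

definition isometric_involution :: "(real^'n \<Rightarrow> real^'n) \<Rightarrow> bool" where
  "isometric_involution s \<longleftrightarrow> hisometry s \<and> (\<forall>x. s (s x) = x)"

definition geodesic_segment :: "(real \<Rightarrow> real^'n) \<Rightarrow> real \<Rightarrow> real^'n \<Rightarrow> real^'n \<Rightarrow> bool" where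
  "geodesic_segment \<gamma> L v1 v2 \<longleftrightarrow> L \<ge> 0 \<and> \<gamma> 0 = v1 \<and> \<gamma> L = v2 \<and>
     (\<forall>a\<in>{0..L}. \<forall>b\<in>{0..L}. hdist (\<gamma> a) (\<gamma> b) = \<bar>a - b\<bar>)"

definition Lambda :: "real \<Rightarrow> real \<Rightarrow> real" where
  "Lambda \<epsilon> R = 4 / \<epsilon> + 2 * R"

end

theory Submission
  imports Defs
begin

definition ht :: "real^'n \<Rightarrow> real" where "ht x = sqrt (1 + (norm x)\<^sup>2)"

definition hB :: "real^'n \<Rightarrow> real^'n \<Rightarrow> real" where "hB x y = ht x * ht y - inner x y"

lemma ht_sq: "(ht x)\<^sup>2 = 1 + (norm x)\<^sup>2"
  unfolding ht_def by simp

lemma ht_pos: "ht x > 0" 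
proof -
  have "0 < 1 + (norm x)\<^sup>2" by (simp add: add_pos_nonneg)
  thus ?thesis unfolding ht_def by simp
qed

lemma ht_gt: "ht x > norm x"
  unfolding ht_def by (rule real_less_rsqrt) simp

lemma aux_sq: "(1 + (a::real) * b)\<^sup>2 \<le> (1 + a\<^sup>2) * (1 + b\<^sup>2)"
proof -
  have "(1 + a\<^sup>2) * (1 + b\<^sup>2) - (1 + a * b)\<^sup>2 = (a - b)\<^sup>2"
    by (simp add: power2_eq_square algebra_simps)
  moreover have "0 \<le> (a - b)\<^sup>2" by simp
  ultimately show ?thesis by linarith
qed


lemma hB_ge1: "hB x y \<ge> 1"
proof -
  have cs: "inner x y \<le> norm x * norm y" by (rule norm_cauchy_schwarz)
  have e: "(ht x * ht y)\<^sup>2 = (1 + (norm x)\<^sup>2) * (1 + (norm y)\<^sup>2)"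
      unfolding power_mult_distrib ht_sq ..
  have sq: "(1 + norm x * norm y)\<^sup>2 \<le> (ht x * ht y)\<^sup>2"
    unfolding e by (rule aux_sq)
  have "1 + norm x * norm y \<le> ht x * ht y"
    apply (rule power2_le_imp_le[OF sq])
    using ht_pos[of x] ht_pos[of y] by simp
  with cs show ?thesis unfolding hB_def by linarith
qed

lemma hdist_hB: "hdist x y = arcosh (hB x y)"
  unfolding hdist_def hB_def ht_def ..

lemma cosh_hdist: "cosh (hdist x y) = hB x y"
  unfolding hdist_hB by (rule cosh_arcosh_real[OF hB_ge1])

lemma hdist_nonneg: "hdist x y \<ge> 0"
  unfolding hdist_hB by (rule arcosh_nonneg_real[OF hB_ge1])

lemma hB_self: "hB x x = 1"
proof -
  have "ht x * ht x = 1 + inner x x"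
    using ht_sq[of x, unfolded power2_norm_eq_inner] by (simp add: power2_eq_square)
  thus ?thesis unfolding hB_def by simp
qed

lemma hB_sym: "hB x y = hB y x"
  unfolding hB_def by (simp add: inner_commute mult.commute)

lemma lorentz_zero:
  fixes u w :: "real^'n"
  assumes "w0 > norm w" "u0 * w0 = inner u w" "u0\<^sup>2 = (norm u)\<^sup>2"
  shows "u0 = 0 \<and> u = 0"
proof -
  have nu: "norm u = \<bar>u0\<bar>" using assms(3) 
    by (metis abs_norm_cancel power2_abs power2_eq_iff_nonneg abs_ge_zero norm_ge_zero)
  have w0: "w0 > 0" using assms(1) norm_ge_zero[of w] by linarith
  have "\<bar>u0\<bar> * w0 = \<bar>u0 * w0\<bar>" using w0 by (simp add: abs_mult)
  also have "\<dots> = \<bar>inner u w\<bar>" using assms(2) by simp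
  also have "\<dots> \<le> norm u * norm w" by (rule Cauchy_Schwarz_ineq2)
  finally have "\<bar>u0\<bar> * w0 \<le> \<bar>u0\<bar> * norm w" unfolding nu .
  hence "\<bar>u0\<bar> * (w0 - norm w) \<le> 0" by (simp add: right_diff_distrib)
  moreover have "w0 - norm w > 0" using assms(1) by simp
  ultimately have "\<bar>u0\<bar> \<le> 0" by (simp add: mult_le_0_iff)
  hence "u0 = 0" by simp
  thus ?thesis using nu by simp
qed

lemma lorentz_neg:
  fixes p w :: "real^'n"
  assumes "p0 \<ge> norm p" "p0 > 0" "w0 * p0 = inner w p"
  shows "w0\<^sup>2 \<le> (norm w)\<^sup>2"
proof -
  have "\<bar>w0\<bar> * p0 = \<bar>w0 * p0\<bar>" using assms(2) by (simp add: abs_mult)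
  also have "\<dots> = \<bar>inner w p\<bar>" using assms(3) by simp
  also have "\<dots> \<le> norm w * norm p" by (rule Cauchy_Schwarz_ineq2)
  also have "\<dots> \<le> norm w * p0" using assms(1) by (simp add: mult_left_mono)
  finally have "\<bar>w0\<bar> \<le> norm w" using assms(2) by simp
  thus ?thesis by (metis abs_ge_zero power2_abs power_mono)
qed

lemma midpoint_unique:
  fixes a b q :: "real^'n"
  assumes ab: "hB a b = 2*c\<^sup>2 - 1" and c: "c > 0" and aq: "hB a q = c" and qb: "hB q b = c"
  shows "q = (1/(2*c)) *\<^sub>R (a+b) \<and> ht q = (ht a + ht b)/(2*c)"
proof -
  define w0 where "w0 = ht a + ht b"
  define w where "w = a + b"
  define u0 where "u0 = ht q - w0/(2*c)"
  define u where "u = q - (1/(2*c)) *\<^sub>R w"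
  have i1: "inner a q = ht a * ht q - c" "inner q a = ht a * ht q - c" using aq unfolding hB_def by (auto simp: inner_commute)
  have i2: "inner b q = ht b * ht q - c" "inner q b = ht b * ht q - c" using qb unfolding hB_def by (auto simp: inner_commute)
  have i3: "inner a b = ht a * ht b - (2*c\<^sup>2 - 1)" "inner b a = ht a * ht b - (2*c\<^sup>2 - 1)" using ab unfolding hB_def by (auto simp: inner_commute)
  have i4: "inner a a = (ht a)\<^sup>2 - 1" "inner b b = (ht b)\<^sup>2 - 1" "inner q q = (ht q)\<^sup>2 - 1"
    using ht_sq[of a] ht_sq[of b] ht_sq[of q] by (simp_all add: power2_norm_eq_inner)
  have wpos: "w0 > norm w"
  proof -
    have "norm w \<le> norm a + norm b" unfolding w_def by (rule norm_triangle_ineq)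
    also have "\<dots> < w0" unfolding w0_def using ht_gt[of a] ht_gt[of b] by linarith
    finally show ?thesis .
  qed
  have e1: "u0 * w0 = inner u w"
    unfolding u0_def u_def w0_def w_def
    by (simp only: inner_diff_left inner_add_left inner_add_right inner_scaleR_left i1 i2 i3 i4)
       (use c in \<open>simp add: field_simps power2_eq_square\<close>)
  have e2: "u0\<^sup>2 = (norm u)\<^sup>2"
    unfolding u0_def u_def w0_def w_def power2_norm_eq_inner
    by (simp only: inner_diff_left inner_diff_right inner_add_left inner_add_right inner_scaleR_left inner_scaleR_right i1 i2 i3 i4)
       (use c in \<open>simp add: field_simps power2_eq_square\<close>)
  from lorentz_zero[OF wpos e1 e2] have "u0 = 0" "u = 0" by auto
  thus ?thesis unfolding u0_def u_def w0_def w_def by auto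
qed

lemma final_ineq:
  fixes \<epsilon> R L :: real
  assumes e: "\<epsilon> > 0" and R: "R \<ge> 0" and L: "L \<ge> 4/\<epsilon> + 2*R"
  shows "cosh R - 1 \<le> cosh \<epsilon> * (cosh (L/2))\<^sup>2 - (cosh (L/2))\<^sup>2"
proof -
  define c where "c = cosh (L/2)"
  have ce: "cosh \<epsilon> \<ge> 1 + \<epsilon>\<^sup>2/4"
  proof -
    have "exp \<epsilon> \<ge> 1 + \<epsilon> + \<epsilon>\<^sup>2/2" using e by (intro exp_lower_Taylor_quadratic) simp
    moreover have "exp (-\<epsilon>) \<ge> 1 + (-\<epsilon>)" by (rule exp_ge_add_one_self)
    ultimately show ?thesis unfolding cosh_field_def by simp
  qed
  have cR: "cosh R - 1 \<le> exp R / 2"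
  proof -
    have "exp (-R) \<le> 1" using R by simp
    thus ?thesis unfolding cosh_field_def add_divide_distrib by linarith
  qed
  have eR: "exp R \<le> exp (2*R)" using R by simp
  have c1: "c \<ge> exp (L/2) / 2"
  proof -
    have "exp (-(L/2)) > 0" by simp
    thus ?thesis unfolding c_def cosh_field_def by simp
  qed
  have c2: "c\<^sup>2 \<ge> exp L / 4"
  proof -
    have "(exp (L/2) / 2)\<^sup>2 \<le> c\<^sup>2" using c1 by (intro power_mono) simp_all
    moreover have "(exp (L/2) / 2)\<^sup>2 = exp L / 4"
      by (simp add: power2_eq_square power_divide exp_add[symmetric])
    ultimately show ?thesis by simp
  qed
  have eL: "exp L \<ge> exp (2*R) * exp (4/\<epsilon>)"
    using L by (simp add: exp_add[symmetric] add.commute)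
  have x8: "\<epsilon>\<^sup>2 * exp (4/\<epsilon>) \<ge> 8"
  proof -
    have "exp (4/\<epsilon>) \<ge> 1 + 4/\<epsilon> + (4/\<epsilon>)\<^sup>2/2" using e by (intro exp_lower_Taylor_quadratic) simp
    moreover have "1 + 4/\<epsilon> \<ge> 0" using e by simp
    ultimately have "exp (4/\<epsilon>) \<ge> (4/\<epsilon>)\<^sup>2/2" by linarith
    hence "\<epsilon>\<^sup>2 * exp (4/\<epsilon>) \<ge> \<epsilon>\<^sup>2 * ((4/\<epsilon>)\<^sup>2/2)" by (intro mult_left_mono) simp_all
    moreover have "\<epsilon>\<^sup>2 * ((4/\<epsilon>)\<^sup>2/2) = 8" using e by (simp add: power_divide field_simps)
    ultimately show ?thesis by simp
  qed
  have "(cosh \<epsilon> - 1) * c\<^sup>2 \<ge> (\<epsilon>\<^sup>2/4) * (exp (2*R) * exp (4/\<epsilon>) / 4)"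
  proof (rule mult_mono)
    show "\<epsilon>\<^sup>2/4 \<le> cosh \<epsilon> - 1" using ce by simp
    show "exp (2*R) * exp (4/\<epsilon>) / 4 \<le> c\<^sup>2" using c2 eL by simp
  qed (simp_all add: cosh_real_ge_1)
  moreover have "(\<epsilon>\<^sup>2/4) * (exp (2*R) * exp (4/\<epsilon>) / 4) = exp (2*R) * (\<epsilon>\<^sup>2 * exp (4/\<epsilon>)) / 16"
    by simp
  ultimately have A: "(cosh \<epsilon> - 1) * c\<^sup>2 \<ge> exp (2*R) * (\<epsilon>\<^sup>2 * exp (4/\<epsilon>)) / 16" by (simp add: mult_ac)
  have B: "exp (2*R) * (\<epsilon>\<^sup>2 * exp (4/\<epsilon>)) \<ge> exp (2*R) * 8"
    using x8 by (intro mult_left_mono) simp_all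
  from A B have "(cosh \<epsilon> - 1) * c\<^sup>2 \<ge> exp (2*R) / 2" by linarith
  with cR eR have "cosh R - 1 \<le> (cosh \<epsilon> - 1) * c\<^sup>2" by linarith
  thus ?thesis unfolding c_def by (simp add: algebra_simps)
qed

lemma inner_hB: "inner x y = ht x * ht y - hB x y"
  unfolding hB_def by simp

lemma key_ineq:
  fixes a b a' b' :: "real^'n"
  assumes "hB a b = K" "hB b a = K" "hB a' b' = K" "hB b' a' = K"
    "hB a a' = \<alpha>" "hB a' a = \<alpha>" "hB b b' = \<beta>" "hB b' b = \<beta>"
    "hB a b' = X" "hB b' a = X" "hB a' b = X" "hB b a' = X"
  shows "X \<le> K - 1 + (\<alpha> + \<beta>)/2"
proof -
  note hs = hB_self[of a] hB_self[of b] hB_self[of a'] hB_self[of b']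
  define p0 where "p0 = ht a + ht a'"
  define p where "p = a + a'"
  define w0 where "w0 = ht a - ht b - ht a' + ht b'"
  define w where "w = a - b - a' + b'"
  have pp: "p0 \<ge> norm p"
  proof -
    have "norm p \<le> norm a + norm a'" unfolding p_def by (rule norm_triangle_ineq)
    thus ?thesis unfolding p0_def using ht_gt[of a] ht_gt[of a'] by linarith
  qed
  have p0: "p0 > 0" unfolding p0_def using ht_pos[of a] ht_pos[of a'] by linarith
  have e: "w0 * p0 = inner w p"
    unfolding w0_def p0_def w_def p_def
    apply (simp only: inner_diff_left inner_diff_right inner_add_left inner_add_right)
       apply (simp only: inner_hB assms hs)
       by (simp add: algebra_simps)
  have "w0\<^sup>2 \<le> (norm w)\<^sup>2" by (rule lorentz_neg[OF pp p0 e])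
  moreover have "w0\<^sup>2 - (norm w)\<^sup>2 = 4 - 4*K - 2*\<alpha> - 2*\<beta> + 4*X"
    unfolding w0_def w_def power2_norm_eq_inner
    apply (simp only: inner_diff_left inner_diff_right inner_add_left inner_add_right)
       apply (simp only: inner_hB assms hs)
       by (simp add: algebra_simps power2_eq_square)
  ultimately have "4 - 4*K - 2*\<alpha> - 2*\<beta> + 4*X \<le> 0" by linarith
  thus ?thesis by (simp add: field_simps)
qed

lemma mid_value:
  fixes a b a' b' :: "real^'n"
  assumes "hB a a' = \<alpha>" "hB b b' = \<beta>" "hB a b' = X" "hB b a' = X"
  shows "(k * (ht a + ht b)) * (k * (ht a' + ht b')) - inner (k *\<^sub>R (a + b)) (k *\<^sub>R (a' + b'))
         = k\<^sup>2 * (\<alpha> + \<beta> + 2 * X)"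
  apply (simp only: inner_scaleR_left inner_scaleR_right inner_add_left inner_add_right)
     apply (simp only: inner_hB assms)
     by (simp add: algebra_simps power2_eq_square)

theorem mainTheorem4:
  fixes \<epsilon> R L :: real and \<gamma> :: "real \<Rightarrow> real^'n" and v1 v2 m :: "real^'n"
    and s :: "real^'n \<Rightarrow> real^'n"
  assumes "\<epsilon> > 0" and "R \<ge> 0"
    and "geodesic_segment \<gamma> L v1 v2" and "m = \<gamma> (L / 2)"
    and "isometric_involution s"
    and "hdist v1 (s v1) \<le> R" and "hdist v2 (s v2) \<le> R"
    and "hdist v1 v2 \<ge> Lambda \<epsilon> R"
  shows "hdist m (s m) \<le> \<epsilon>"
proof -
  from assms(3) have L0: "L \<ge> 0" and g0: "\<gamma> 0 = v1" and gL: "\<gamma> L = v2"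
    and gd: "\<And>a b. a \<in> {0..L} \<Longrightarrow> b \<in> {0..L} \<Longrightarrow> hdist (\<gamma> a) (\<gamma> b) = \<bar>a - b\<bar>"
    unfolding geodesic_segment_def by auto
  have d1: "hdist v1 m = L/2" using gd[of 0 "L/2"] L0 g0 assms(4) by simp
  have d2: "hdist m v2 = L/2" using gd[of "L/2" L] L0 gL assms(4) by simp
  have d3: "hdist v1 v2 = L" using gd[of 0 L] L0 g0 gL by simp
  define c where "c = cosh (L/2)"
  have c0: "c > 0" unfolding c_def using cosh_real_ge_1[of "L/2"] by linarith
  have cL: "cosh L = 2*c\<^sup>2 - 1" unfolding c_def using cosh_double_cosh[of "L/2"] by simp
  have iso: "\<And>x y. hdist (s x) (s y) = hdist x y" and inv: "\<And>x. s (s x) = x"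
    using assms(5) unfolding isometric_involution_def hisometry_def by auto
  have hBs: "\<And>x y. hB (s x) (s y) = hB x y"
    by (metis cosh_hdist iso)
  have B12: "hB v1 v2 = 2*c\<^sup>2 - 1" using d3 cL cosh_hdist by metis
  have B1m: "hB v1 m = c" using d1 c_def cosh_hdist by metis
  have Bm2: "hB m v2 = c" using d2 c_def cosh_hdist by metis
  note M = midpoint_unique[OF B12 c0 B1m Bm2]
  note SM = midpoint_unique[of "s v1" "s v2" c "s m", unfolded hBs, OF B12 c0 B1m Bm2]
  define \<alpha> where "\<alpha> = hB v1 (s v1)"
  define \<beta> where "\<beta> = hB v2 (s v2)"
  define X where "X = hB v1 (s v2)"
  define K where "K = hB v1 v2"
  have aR: "\<alpha> \<le> cosh R"
    unfolding \<alpha>_def cosh_hdist[symmetric]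
    using assms(2,6) hdist_nonneg cosh_real_nonneg_le_iff by metis
  have bR: "\<beta> \<le> cosh R"
    unfolding \<beta>_def cosh_hdist[symmetric]
    using assms(2,7) hdist_nonneg cosh_real_nonneg_le_iff by metis
  have X2: "hB (s v1) v2 = X"
    unfolding X_def by (metis hBs inv)
  have key: "X \<le> K - 1 + (\<alpha> + \<beta>)/2"
    by (rule key_ineq[of v1 v2 K "s v1" "s v2" \<alpha> \<beta> X])
       (auto simp: K_def \<alpha>_def \<beta>_def X_def X2 hBs hB_sym[of v2 v1] hB_sym[of "s v1" v1]
          hB_sym[of "s v2" v2] hB_sym[of "s v2" v1] hB_sym[of v2 "s v1"])
  define k where "k = 1/(2*c)"
  have "hB m (s m) = (k * (ht v1 + ht v2)) * (k * (ht (s v1) + ht (s v2))) 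
        - inner (k *\<^sub>R (v1 + v2)) (k *\<^sub>R (s v1 + s v2))"
  proof -
    have m1: "m = k *\<^sub>R (v1 + v2)" "ht m = k * (ht v1 + ht v2)"
      using M unfolding k_def by auto
    have m2: "s m = k *\<^sub>R (s v1 + s v2)" "ht (s m) = k * (ht (s v1) + ht (s v2))"
      using SM unfolding k_def by auto
    show ?thesis unfolding hB_def unfolding m2(2) unfolding m2(1) unfolding m1(2) unfolding m1(1) ..
  qed
  also have "\<dots> = k\<^sup>2 * (\<alpha> + \<beta> + 2 * X)"
    by (rule mid_value) (auto simp: \<alpha>_def \<beta>_def X_def X2 hB_sym[of v2 "s v1"])
  finally have hm: "hB m (s m) = k\<^sup>2 * (\<alpha> + \<beta> + 2 * X)" .
  have fin: "cosh R - 1 \<le> cosh \<epsilon> * c\<^sup>2 - c\<^sup>2"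
    unfolding c_def using final_ineq[OF assms(1,2)] assms(8) d3 unfolding Lambda_def by simp
  have num: "\<alpha> + \<beta> + 2 * X \<le> 4 * c\<^sup>2 * cosh \<epsilon>"
  proof -
    have "4 * c\<^sup>2 * cosh \<epsilon> = 4 * (cosh \<epsilon> * c\<^sup>2)" by simp
    moreover have "2*X \<le> 2*K - 2 + \<alpha> + \<beta>" using key by (simp add: field_simps)
    ultimately show ?thesis using aR bR fin B12 unfolding K_def by linarith
  qed
  have k2: "k\<^sup>2 = 1 / (4 * c\<^sup>2)" unfolding k_def by (simp add: power2_eq_square)
  have c2: "c\<^sup>2 > 0" using c0 by simp
  have "hB m (s m) \<le> 1 / (4 * c\<^sup>2) * (4 * c\<^sup>2 * cosh \<epsilon>)"
    unfolding hm k2 using num c2 by (intro mult_left_mono) simp_all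
  also have "\<dots> = cosh \<epsilon>" using c2 by simp
  finally have "cosh (hdist m (s m)) \<le> cosh \<epsilon>" unfolding cosh_hdist .
  thus ?thesis
    using cosh_real_nonneg_le_iff[of "hdist m (s m)" \<epsilon>] hdist_nonneg[of m "s m"] assms(1) by simp
qed
end
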